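(* Let $n\ge1$ and let $\mathbf{u}_0,\dots,\mathbf{u}_n$ be linearly independent unit vectors in $\mathbf{C}^{n+1}$. For a nonzero $\mathbf{c}$ let $H_{\mathbf{c}}=\{[\mathbf{x}]\in\mathbf{CP}^n:\mathbf{c}\cdot\mathbf{x}=0\}$; the hyperplanes $H_{\mathbf{u}_0},\dots,H_{\mathbf{u}_n}$ are the faces of a projective simplex. For each $j$ let $P_j$ be the unique point of $\bigcap_{i\ne j}H_{\mathbf{u}_i}$ (the vertex opposite $H_{\mathbf{u}_j}$), let $d_j$ be the Fubini–Study distance from $P_j$ to $H_{\mathbf{u}_j}$, and let $d_{\min}=\min_j d_j$. Then $$d_{\min}^n\le|\det(\mathbf{u}_0,\dots,\mathbf{u}_n)|\le d_{\min}.$$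
   Context: The dot product on $\mathbf{C}^{n+1}$ is the bilinear form $\mathbf{a}\cdot\mathbf{b}=\sum_i a_ib_i$ (standard basis $\mathbf{e}_0,\dots,\mathbf{e}_n$), and $|\mathbf{a}|^2=\mathbf{a}\cdot\overline{\mathbf{a}}$. On $\Lambda^k\mathbf{C}^{n+1}$ the basis $\mathbf{e}_{i_1}\wedge\dots\wedge\mathbf{e}_{i_k}$ is declared orthonormal, giving a norm $|\omega|^2=\omega\cdot\overline\omega$. $\mathbf{CP}^n$ is the set of classes $[\mathbf{v}]$ of nonzero vectors modulo nonzero scalars. The Fubini–Study distance between points represented by unit vectors $\mathbf{v},\mathbf{w}$ is $|\mathbf{v}\wedge\mathbf{w}|$; the distance from a point $[\mathbf{u}]$ ($|\mathbf{u}|=1$) to a hyperplane $H_{\mathbf{c}}$ is $\min\{|\mathbf{u}\wedge\mathbf{x}|:\mathbf{c}\cdot\mathbf{x}=0,\ |\mathbf{x}|=1\}$. $\det(\mathbf{u}_0,\dots,\mathbf{u}_n)$ is the determinant of the matrix with these rows. *)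

theory Defs
  imports "HOL-Analysis.Analysis"
begin

text \<open>Vectors of C^{n+1} are modelled as complex ^ 'n with CARD('n) = n+1.\<close>

text \<open>Bilinear dot product a . b = sum_i a_i b_i (no conjugation).\<close>
definition cdot :: "complex^'n \<Rightarrow> complex^'n \<Rightarrow> complex" where
  "cdot a b = (\<Sum>i\<in>UNIV. a$i * b$i)"

text \<open>Norm of v \<and> w in Lambda^2 with orthonormal basis e_i \<and> e_j (i<j):
  |v\<and>w|^2 = sum_{i<j} |v_i w_j - v_j w_i|^2, written as half the sum over all ordered pairs.\<close>
definition wedge_norm :: "complex^'n \<Rightarrow> complex^'n \<Rightarrow> real" where
  "wedge_norm v w = sqrt ((\<Sum>i\<in>UNIV. \<Sum>j\<in>UNIV. (cmod (v$i * w$j - v$j * w$i))\<^sup>2) / 2)"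

definition lin_indep_family :: "('i::finite \<Rightarrow> complex^'n) \<Rightarrow> bool" where
  "lin_indep_family u \<longleftrightarrow> (\<forall>a. (\<Sum>i\<in>UNIV. a i *s u i) = 0 \<longrightarrow> (\<forall>i. a i = 0))"

text \<open>Fubini--Study distance from the point [q] (q a unit vector) to the hyperplane H_c.\<close>
definition dist_pt_hyp :: "complex^'n \<Rightarrow> complex^'n \<Rightarrow> real" where
  "dist_pt_hyp q c = Inf {wedge_norm q x | x. cdot c x = 0 \<and> norm x = 1}"

end

theory Submission
  imports Defs
begin

definition herm :: "complex^'n \<Rightarrow> complex^'n \<Rightarrow> complex" where
  "herm x y = (\<Sum>i\<in>UNIV. x$i * cnj (y$i))"

lemma norm_sq_vec: "(norm (x::complex^'n))^2 = (\<Sum>i\<in>UNIV. (cmod (x$i))^2)"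
  unfolding norm_vec_def L2_set_def by (simp add: sum_nonneg)

lemma herm_self: "herm x x = of_real ((norm x)^2)"
  unfolding herm_def norm_sq_vec of_real_sum
  by (rule sum.cong) (simp_all add: complex_norm_square[symmetric])

lemma herm_sym: "herm y x = cnj (herm x y)"
  unfolding herm_def by (simp add: mult.commute)

lemma herm_add_left: "herm (x + y) z = herm x z + herm y z"
  unfolding herm_def by (simp add: distrib_right sum.distrib)
lemma herm_diff_left: "herm (x - y) z = herm x z - herm y z"
  unfolding herm_def by (simp add: left_diff_distrib sum_subtractf)
lemma herm_scale_left: "herm (c *s x) z = c * herm x z"
  unfolding herm_def by (simp add: sum_distrib_left mult.assoc)
lemma herm_sum_left: "herm (sum f S) z = (\<Sum>i\<in>S. herm (f i) z)"
  unfolding herm_def by (simp add: sum_component sum_distrib_right; rule sum.swap)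
lemma herm_add_right: "herm z (x + y) = herm z x + herm z y"
  by (metis herm_sym herm_add_left complex_cnj_add)
lemma herm_scale_right: "herm z (c *s x) = cnj c * herm z x"
  by (metis herm_sym herm_scale_left complex_cnj_mult)
lemma herm_zero_right[simp]: "herm z 0 = 0"
  unfolding herm_def by simp
lemma herm_zero_left[simp]: "herm 0 z = 0"
  unfolding herm_def by simp

lemma herm_self_zero: "herm x x = 0 \<longleftrightarrow> x = 0"
  unfolding herm_self by simp

lemma norm_add_orth:
  assumes "herm a b = 0"
  shows "(norm (a + b))^2 = (norm a)^2 + (norm b)^2"
proof -
  have "herm b a = 0" using assms herm_sym by (metis complex_cnj_zero)
  then have "herm (a+b) (a+b) = herm a a + herm b b"
    using assms by (simp add: herm_add_left herm_add_right)
  then show ?thesis unfolding herm_self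
    by (metis of_real_add of_real_eq_iff)
qed

lemma det_cnj: "det (\<chi> i j. cnj ((A::complex^'n^'n)$i$j)) = cnj (det A)"
  unfolding det_def by (simp add: cnj_sum cnj_prod)

lemma det_cnj_transpose: "det (\<chi> i j. cnj ((A::complex^'n^'n)$j$i)) = cnj (det A)"
proof -
  have "(\<chi> i j. cnj (A$j$i)) = transpose (\<chi> i j. cnj (A$i$j))"
    by (simp add: transpose_def)
  then show ?thesis using det_cnj by simp
qed

definition orth_out :: "'n set \<Rightarrow> complex^'n^'n \<Rightarrow> bool" where
  "orth_out F A \<longleftrightarrow> (\<forall>i k. i \<notin> F \<longrightarrow> k \<notin> F \<longrightarrow> i \<noteq> k \<longrightarrow> herm (A$i) (A$k) = 0)"

lemma hadamard_base:
  fixes A :: "complex^'n^'n"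
  assumes "orth_out {} A"
  shows "cmod (det A) \<le> (\<Prod>i\<in>UNIV. norm (A$i))"
proof -
  let ?C = "(\<chi> i j. cnj (A$j$i)) :: complex^'n^'n"
  have M: "(A ** ?C)$i$k = herm (A$i) (A$k)" for i k
    by (simp add: matrix_matrix_mult_def herm_def)
  have "det (A ** ?C) = (\<Prod>i\<in>UNIV. herm (A$i) (A$i))"
    by (rule trans[OF det_diagonal]) (use assms in \<open>auto simp: M orth_out_def\<close>)
  then have "det A * cnj (det A) = of_real (\<Prod>i\<in>UNIV. (norm (A$i))^2)"
    by (simp add: det_mul det_cnj_transpose herm_self)
  moreover have "det A * cnj (det A) = of_real ((cmod (det A))^2)"
    by (simp add: complex_norm_square[symmetric])
  ultimately have "(cmod (det A))^2 = (\<Prod>i\<in>UNIV. (norm (A$i))^2)"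
    using of_real_eq_iff by metis
  then have "(cmod (det A))^2 = (\<Prod>i\<in>UNIV. norm (A$i))^2"
    by (simp add: prod_power_distrib)
  then have "cmod (det A) = (\<Prod>i\<in>UNIV. norm (A$i))"
    by (rule power2_eq_imp_eq) (auto intro: prod_nonneg)
  then show ?thesis by simp
qed

lemma hadamard_aux:
  assumes "finite F"
  shows "\<forall>A::complex^'n^'n. orth_out F A \<longrightarrow> cmod (det A) \<le> (\<Prod>i\<in>UNIV. norm (A$i))"
  using assms
proof (induction F rule: finite_induct)
  case empty
  then show ?case using hadamard_base by blast
next
  case (insert j F)
  show ?case
  proof (intro allI impI)
    fix A :: "complex^'n^'n"
    assume orth: "orth_out (insert j F) A"
    define G where "G = - insert j F"
    define c where "c i = herm (A$j) (A$i) / herm (A$i) (A$i)" for i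
    define p where "p = (\<Sum>i\<in>G. c i *s A$i)"
    define A' where "A' = (\<chi> k. if k = j then A$j - p else A$k)"
    have jG: "j \<notin> G" unfolding G_def by auto
    have det_eq: "det A' = det A"
    proof -
      have "A' = (\<chi> k. if k = j then A$j + (\<Sum>i\<in>G. (- c i) *s A$i) else A$k)"
      proof -
        have eq: "(\<Sum>i\<in>G. (- c i) *s A$i) = - p"
          by (simp add: p_def vec_eq_iff sum_component sum_negf[symmetric])
        show ?thesis unfolding A'_def by (simp only: eq diff_conv_add_uminus)
      qed
      then have "det A' = det (\<chi> k. if k = j then A$j else A$k)
          + det (\<chi> k. if k = j then (\<Sum>i\<in>G. (- c i) *s A$i) else A$k)"
        by (simp add: det_row_add)
      also have "(\<chi> k. if k = j then A$j else A$k) = A" by (simp add: vec_eq_iff)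
      also have "det (\<chi> k. if k = j then (\<Sum>i\<in>G. (- c i) *s A$i) else A$k)
          = (\<Sum>i\<in>G. det (\<chi> k. if k = j then (- c i) *s A$i else A$k))"
        by (rule det_linear_row_sum) simp
      also have "\<dots> = (\<Sum>i\<in>G. (- c i) * det (\<chi> k. if k = j then A$i else A$k))"
        by (simp add: det_row_mul)
      also have "\<dots> = 0"
      proof (rule sum.neutral, intro ballI)
        fix i assume "i \<in> G"
        then have "i \<noteq> j" using jG by auto
        then have "det ((\<chi> k. if k = j then A$i else A$k) :: complex^'n^'n) = 0"
          by (intro det_identical_rows[of i j]) (auto simp: row_def vec_eq_iff)
        then show "(- c i) * det ((\<chi> k. if k = j then A$i else A$k) :: complex^'n^'n) = 0" by simp
      qed
      finally show ?thesis by simp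
    qed
    have orthG: "herm (A$i) (A$k) = 0" if "i \<in> G" "k \<in> G" "i \<noteq> k" for i k
      using orth that unfolding orth_out_def G_def by auto
    have hk: "herm (A$j - p) (A$k) = 0" if kG: "k \<in> G" for k
    proof -
      have "herm p (A$k) = (\<Sum>i\<in>G. c i * herm (A$i) (A$k))"
        unfolding p_def by (simp add: herm_sum_left herm_scale_left)
      also have "\<dots> = c k * herm (A$k) (A$k) + (\<Sum>i\<in>G-{k}. c i * herm (A$i) (A$k))"
        using kG by (simp add: sum.remove)
      also have "(\<Sum>i\<in>G-{k}. c i * herm (A$i) (A$k)) = 0"
        using orthG kG by (intro sum.neutral) auto
      finally have "herm p (A$k) = c k * herm (A$k) (A$k)" by simp
      moreover have "c k * herm (A$k) (A$k) = herm (A$j) (A$k)"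
      proof (cases "herm (A$k) (A$k) = 0")
        case True
        then have "A$k = 0" using herm_self_zero by blast
        then show ?thesis using True by simp
      next
        case False
        then show ?thesis unfolding c_def by simp
      qed
      ultimately show ?thesis by (simp add: herm_diff_left)
    qed
    have orth': "orth_out F A'"
      unfolding orth_out_def
    proof (intro allI impI)
      fix i k assume iF: "i \<notin> F" and kF: "k \<notin> F" and ik: "i \<noteq> k"
      show "herm (A'$i) (A'$k) = 0"
      proof (cases "i = j")
        case True
        then have "k \<in> G" using kF ik G_def by auto
        then show ?thesis using True ik hk by (simp add: A'_def)
      next
        case False
        note iJ = False
        show ?thesis
        proof (cases "k = j")
          case True
          then have "i \<in> G" using iF ik G_def by auto
          then have "herm (A$j - p) (A$i) = 0" using hk by blast
          then show ?thesis using True ik by (simp add: A'_def herm_sym[of "A$i"])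
        next
          case False
          then show ?thesis using iJ iF kF ik orth unfolding orth_out_def A'_def by simp
        qed
      qed
    qed
    have "herm (A$j - p) p = (\<Sum>i\<in>G. cnj (c i) * herm (A$j - p) (A$i))"
      unfolding p_def
      by (subst herm_sym, simp only: herm_sum_left herm_scale_left cnj_sum complex_cnj_mult complex_cnj_cnj
         flip: herm_sym)
    also have "\<dots> = 0" using hk by simp
    finally have "herm (A$j - p) p = 0" .
    then have "(norm (A$j))^2 = (norm (A$j - p))^2 + (norm p)^2"
      using norm_add_orth[of "A$j - p" p] by simp
    then have "(norm (A$j - p))^2 \<le> (norm (A$j))^2"
      by (metis le_add_same_cancel1 zero_le_power2)
    then have nle: "norm (A$j - p) \<le> norm (A$j)"
      by (rule power2_le_imp_le) simp
    have "cmod (det A) = cmod (det A')" using det_eq by simp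
    also have "\<dots> \<le> (\<Prod>i\<in>UNIV. norm (A'$i))" using insert.IH orth' by blast
    also have "\<dots> \<le> (\<Prod>i\<in>UNIV. norm (A$i))"
      by (rule prod_mono) (simp add: A'_def nle)
    finally show "cmod (det A) \<le> (\<Prod>i\<in>UNIV. norm (A$i))" .
  qed
qed

lemma hadamard: "cmod (det (A::complex^'n^'n)) \<le> (\<Prod>i\<in>UNIV. norm (A$i))"
  using hadamard_aux[of "UNIV :: 'n set"] by (simp add: orth_out_def)

lemma cdot_comm: "cdot a b = cdot b a"
  unfolding cdot_def by (simp add: mult.commute)

lemma cdot_diff_left: "cdot (x - y) z = cdot x z - cdot y z"
  unfolding cdot_def by (simp add: left_diff_distrib sum_subtractf)
lemma cdot_scale_left: "cdot (c *s x) z = c * cdot x z"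
  unfolding cdot_def by (simp add: sum_distrib_left mult.assoc)

definition cv :: "complex^'n \<Rightarrow> complex^'n" where "cv b = (\<chi> k. cnj (b$k))"

lemma norm_cv: "norm (cv b) = norm b"
  unfolding cv_def norm_vec_def by simp

lemma herm_cv: "herm x (cv c) = cdot c x"
  unfolding herm_def cv_def cdot_def by (simp add: mult.commute)

lemma key:
  fixes A :: "complex^'n^'n" and b :: "complex^'n"
  assumes unitA: "\<forall>i. norm (A$i) = 1" and nb: "norm b = 1"
    and orth: "\<forall>i. i \<noteq> j \<longrightarrow> cdot (A$i) b = 0"
  shows "cmod (det A) \<le> cmod (cdot (A$j) b)"
proof -
  define \<alpha> where "\<alpha> = cdot (A$j) b"
  define w where "w = A$j - \<alpha> *s cv b"
  have cb1: "cdot (cv b) b = 1"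
    using herm_self[of b] nb unfolding herm_def cdot_def cv_def by (simp add: mult.commute)
  have wb: "cdot w b = 0"
    unfolding w_def using cb1 by (simp add: cdot_diff_left cdot_scale_left \<alpha>_def)
  have Aj: "A$j = w + \<alpha> *s cv b" unfolding w_def by simp
  have "det A = det (\<chi> k. if k = j then w + \<alpha> *s cv b else A$k)"
    by (rule arg_cong[where f=det]) (simp add: vec_eq_iff Aj)
  also have "\<dots> = det (\<chi> k. if k = j then w else A$k) + \<alpha> * det (\<chi> k. if k = j then cv b else A$k)"
    by (simp add: det_row_add det_row_mul)
  also have "det ((\<chi> k. if k = j then w else A$k) :: complex^'n^'n) = 0"
  proof (rule ccontr)
    let ?W = "(\<chi> k. if k = j then w else A$k) :: complex^'n^'n"
    assume "det ?W \<noteq> 0"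
    then obtain B where "B ** ?W = mat 1"
      using invertible_det_nz invertible_left_inverse by blast
    then have ker: "\<forall>x. ?W *v x = 0 \<longrightarrow> x = 0"
      using matrix_left_invertible_ker by blast
    have "?W *v b = 0"
      using wb orth by (auto simp: vec_eq_iff matrix_vector_mult_def cdot_def)
    then have "b = 0" using ker by blast
    then show False using nb by simp
  qed
  finally have dA: "det A = \<alpha> * det (\<chi> k. if k = j then cv b else A$k)" by simp
  have "cmod (det ((\<chi> k. if k = j then cv b else A$k) :: complex^'n^'n))
      \<le> (\<Prod>i\<in>UNIV. norm (((\<chi> k. if k = j then cv b else A$k) :: complex^'n^'n)$i))"
    by (rule hadamard)
  also have "\<dots> = 1" using unitA nb by (intro prod.neutral) (simp add: norm_cv)
  finally have "cmod (det ((\<chi> k. if k = j then cv b else A$k) :: complex^'n^'n)) \<le> 1" .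
  then show ?thesis unfolding dA \<alpha>_def norm_mult
    by (simp add: mult_left_le)
qed

lemma lagrange_c:
  fixes v w :: "complex^'n"
  shows "(\<Sum>i\<in>UNIV. \<Sum>j\<in>UNIV. (v$i * w$j - v$j * w$i) * cnj (v$i * w$j - v$j * w$i))
     = 2 * (herm v v * herm w w - herm v w * herm w v)"
proof -
  have e: "(v$i * w$j - v$j * w$i) * cnj (v$i * w$j - v$j * w$i)
      = (v$i * cnj (v$i)) * (w$j * cnj (w$j)) + (w$i * cnj (w$i)) * (v$j * cnj (v$j))
        - (v$i * cnj (w$i)) * (w$j * cnj (v$j)) - (w$i * cnj (v$i)) * (v$j * cnj (w$j))" for i j
    by (simp add: algebra_simps)
  have "(\<Sum>i\<in>UNIV. \<Sum>j\<in>UNIV. (v$i * w$j - v$j * w$i) * cnj (v$i * w$j - v$j * w$i))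
     = herm v v * herm w w + herm w w * herm v v - herm v w * herm w v - herm w v * herm v w"
    unfolding e herm_def sum_product by (simp add: sum_subtractf sum.distrib)
  then show ?thesis by (simp add: algebra_simps)
qed

lemma lagrange:
  fixes v w :: "complex^'n"
  shows "(\<Sum>i\<in>UNIV. \<Sum>j\<in>UNIV. (cmod (v$i * w$j - v$j * w$i))^2)
     = 2 * ((norm v)^2 * (norm w)^2 - (cmod (herm v w))^2)"
proof -
  have "complex_of_real (\<Sum>i\<in>UNIV. \<Sum>j\<in>UNIV. (cmod (v$i * w$j - v$j * w$i))^2)
     = (\<Sum>i\<in>UNIV. \<Sum>j\<in>UNIV. (v$i * w$j - v$j * w$i) * cnj (v$i * w$j - v$j * w$i))"
    by (simp add: complex_norm_square del: of_real_power)
  also have "\<dots> = 2 * (herm v v * herm w w - herm v w * herm w v)" by (rule lagrange_c)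
  also have "\<dots> = complex_of_real (2 * ((norm v)^2 * (norm w)^2 - (cmod (herm v w))^2))"
    by (simp add: herm_self herm_sym[of w v] complex_norm_square del: of_real_power)
  finally show ?thesis using of_real_eq_iff by blast
qed

lemma wedge_sq:
  fixes v w :: "complex^'n"
  shows "(wedge_norm v w)^2 = (norm v)^2 * (norm w)^2 - (cmod (herm v w))^2"
    and "(cmod (herm v w))^2 \<le> (norm v)^2 * (norm w)^2"
proof -
  have nn: "0 \<le> (\<Sum>i\<in>UNIV. \<Sum>j\<in>UNIV. (cmod (v$i * w$j - v$j * w$i))^2)"
    by (intro sum_nonneg) auto
  then show "(cmod (herm v w))^2 \<le> (norm v)^2 * (norm w)^2" unfolding lagrange by simp
  show "(wedge_norm v w)^2 = (norm v)^2 * (norm w)^2 - (cmod (herm v w))^2"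
    unfolding wedge_norm_def using nn by (simp add: lagrange)
qed

lemma wedge_nonneg: "0 \<le> wedge_norm v w"
  unfolding wedge_norm_def by (intro real_sqrt_ge_zero divide_nonneg_pos sum_nonneg) auto

lemma norm_smult: "norm (c *s (x::complex^'n)) = cmod c * norm x"
proof -
  have "herm (c *s x) (c *s x) = (c * cnj c) * herm x x"
    by (simp add: herm_scale_left herm_scale_right mult.assoc)
  then have "complex_of_real ((norm (c *s x))^2) = complex_of_real ((cmod c)^2) * complex_of_real ((norm x)^2)"
    by (simp only: herm_self complex_norm_square)
  then have "complex_of_real ((norm (c *s x))^2) = complex_of_real ((cmod c * norm x)^2)"
    by (simp only: of_real_mult power_mult_distrib)
  then have "(norm (c *s x))^2 = (cmod c * norm x)^2" using of_real_eq_iff by blast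
  then show ?thesis by (rule power2_eq_imp_eq) auto
qed

lemma exists_orth_unit:
  assumes "CARD('n) \<ge> 2"
  shows "\<exists>x::complex^'n. norm x = 1 \<and> cdot c x = 0"
proof -
  obtain i k :: 'n where ik: "i \<noteq> k"
  proof -
    have "\<not> (\<forall>i k::'n. i = k)"
    proof
      assume "\<forall>i k::'n. i = k"
      then have "card (UNIV::'n set) \<le> 1" by (simp add: card_le_Suc0_iff_eq)
      then show False using assms by simp
    qed
    then show ?thesis using that by blast
  qed
  define y where "y = (\<chi> l. if l = i then c$k else if l = k then - c$i else (0::complex))"
  have cy: "cdot c y = 0"
  proof -
    have "cdot c y = (\<Sum>l\<in>UNIV. (if l = i then c$i * c$k else 0) + (if l = k then - c$k * c$i else 0))"
      unfolding cdot_def y_def using ik by (intro sum.cong) auto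
    also have "\<dots> = 0" by (simp add: sum.distrib)
    finally show ?thesis .
  qed
  show ?thesis
  proof (cases "y = 0")
    case False
    define x where "x = complex_of_real (1 / norm y) *s y"
    have "norm x = 1" using False by (simp add: x_def norm_smult norm_divide)
    moreover have "cdot c x = 0"
      using cy unfolding x_def cdot_comm[of c] cdot_scale_left by (simp add: cdot_comm[of y])
    ultimately show ?thesis by blast
  next
    case True
    have "y$k = - c$i" using ik by (simp add: y_def)
    then have ci: "c$i = 0" using True by simp
    define x where "x = (axis i 1 :: complex^'n)"
    have "norm x = 1" by (simp add: x_def)
    moreover have "cdot c x = 0"
      unfolding cdot_def x_def axis_def using ci
      by (simp add: if_distrib cong: if_cong)
    ultimately show ?thesis by blast
  qed
qed

lemma dist_eq:
  fixes q c :: "complex^'n"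
  assumes card2: "CARD('n) \<ge> 2" and nq: "norm q = 1" and nc: "norm c = 1"
  shows "dist_pt_hyp q c = cmod (cdot c q)"
proof -
  define \<beta> where "\<beta> = cdot c q"
  define cc where "cc = cv c"
  define r where "r = q - \<beta> *s cc"
  have ncc: "norm cc = 1" unfolding cc_def norm_cv by (rule nc)
  have hcc: "herm cc cc = 1" by (simp add: herm_self ncc)
  have hqcc: "herm q cc = \<beta>" unfolding cc_def \<beta>_def herm_cv ..
  have hrcc: "herm r cc = 0" unfolding r_def by (simp add: herm_diff_left herm_scale_left hqcc hcc)
  have qdec: "q = r + \<beta> *s cc" unfolding r_def by simp
  have "herm r (\<beta> *s cc) = 0" by (simp add: herm_scale_right hrcc)
  then have "(norm (r + \<beta> *s cc))^2 = (norm r)^2 + (norm (\<beta> *s cc))^2"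
    by (rule norm_add_orth)
  then have "(norm q)^2 = (norm r)^2 + (norm (\<beta> *s cc))^2"
    using qdec by simp
  then have nr: "(norm r)^2 = 1 - (cmod \<beta>)^2" using nq ncc by (simp add: norm_smult)
  have hqx: "herm q x = herm r x" if "cdot c x = 0" for x
  proof -
    have "herm cc x = 0" using that herm_sym[of cc x] herm_cv[of x c] cc_def by simp
    then show ?thesis by (simp add: qdec herm_add_left herm_scale_left)
  qed
  let ?S = "{wedge_norm q x | x. cdot c x = 0 \<and> norm x = 1}"
  have lower: "cmod \<beta> \<le> wedge_norm q x" if "cdot c x = 0" "norm x = 1" for x
  proof -
    have "(cmod (herm r x))^2 \<le> (norm r)^2 * (norm x)^2" by (rule wedge_sq(2))
    then have "(cmod (herm q x))^2 \<le> 1 - (cmod \<beta>)^2" using that nr hqx by simp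
    then have "(cmod \<beta>)^2 \<le> (wedge_norm q x)^2" using wedge_sq(1)[of q x] nq that by simp
    then show ?thesis by (rule power2_le_imp_le) (simp add: wedge_nonneg)
  qed
  have attained: "cmod \<beta> \<in> ?S"
  proof (cases "r = 0")
    case False
    define x where "x = complex_of_real (1 / norm r) *s r"
    have nx: "norm x = 1" using False by (simp add: x_def norm_smult norm_divide)
    have cr: "cdot c r = 0" using hrcc herm_cv[of r c] cc_def by simp
    have "cdot c x = cdot x c" by (rule cdot_comm)
    also have "\<dots> = complex_of_real (1 / norm r) * cdot r c" unfolding x_def by (rule cdot_scale_left)
    also have "cdot r c = cdot c r" by (rule cdot_comm)
    finally have cx: "cdot c x = 0" using cr by simp
    have "herm q x = herm r x" using hqx cx by blast
    also have "\<dots> = complex_of_real (1 / norm r) * herm r r"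
      unfolding x_def by (simp add: herm_scale_right)
    also have "\<dots> = complex_of_real (norm r)" using False
      by (simp add: herm_self power2_eq_square)
    finally have "(cmod (herm q x))^2 = (norm r)^2" by simp
    then have "(wedge_norm q x)^2 = (cmod \<beta>)^2" using wedge_sq(1)[of q x] nq nx nr by simp
    then have "wedge_norm q x = cmod \<beta>" by (rule power2_eq_imp_eq) (simp_all add: wedge_nonneg)
    then show ?thesis using nx cx unfolding mem_Collect_eq by (intro exI[of _ x]) simp
  next
    case True
    obtain x where nx: "norm x = 1" and cx: "cdot c x = 0" using exists_orth_unit[OF card2] by blast
    have "herm q x = 0" using hqx cx True by simp
    then have "(wedge_norm q x)^2 = 1" using wedge_sq(1)[of q x] nq nx by simp
    moreover have "(cmod \<beta>)^2 = 1" using nr True by simp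
    ultimately have "(wedge_norm q x)^2 = (cmod \<beta>)^2" by simp
    then have "wedge_norm q x = cmod \<beta>"
      by (rule power2_eq_imp_eq) (simp_all add: wedge_nonneg)
    then show ?thesis using nx cx unfolding mem_Collect_eq by (intro exI[of _ x]) simp
  qed
  have "Inf ?S = cmod \<beta>"
  proof (rule cInf_eq_minimum[OF attained])
    fix y assume "y \<in> ?S"
    then obtain x where "y = wedge_norm q x" "cdot c x = 0" "norm x = 1" by auto
    then show "cmod \<beta> \<le> y" using lower by simp
  qed
  then show ?thesis unfolding dist_pt_hyp_def \<beta>_def .
qed

theorem mainTheorem10:
  fixes U :: "complex^'n^'n" and P :: "'n \<Rightarrow> complex^'n"
  assumes n1: "CARD('n) \<ge> 2"
    and unit: "\<forall>i. norm (U$i) = 1"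
    and indep: "lin_indep_family (\<lambda>i. U$i)"
    and vert: "\<forall>j. norm (P j) = 1 \<and> (\<forall>i. i \<noteq> j \<longrightarrow> cdot (U$i) (P j) = 0)"
  shows "(Min (range (\<lambda>j. dist_pt_hyp (P j) (U$j)))) ^ (CARD('n) - 1) \<le> cmod (det U)
       \<and> cmod (det U) \<le> Min (range (\<lambda>j. dist_pt_hyp (P j) (U$j)))"
proof -
  define e where "e j = cdot (U$j) (P j)" for j
  define m where "m = Min (range (\<lambda>j. dist_pt_hyp (P j) (U$j)))"
  have d: "dist_pt_hyp (P j) (U$j) = cmod (e j)" for j
    unfolding e_def using dist_eq[OF n1] vert unit by blast
  have m_def': "m = Min (range (\<lambda>j. cmod (e j)))" unfolding m_def d ..
  have mle: "m \<le> cmod (e j)" for j unfolding m_def' by (rule Min_le) auto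
  obtain j0 where mj0: "m = cmod (e j0)"
  proof -
    have "m \<in> range (\<lambda>j. cmod (e j))" unfolding m_def' by (rule Min_in) auto
    then show ?thesis using that by blast
  qed
  have upU: "cmod (det U) \<le> cmod (e j)" for j
    unfolding e_def by (rule key) (use unit vert in auto)
  define Pm where "Pm = (\<chi> j. P j)"
  have upP: "cmod (det Pm) \<le> cmod (e j)" for j
  proof -
    have "cmod (det Pm) \<le> cmod (cdot (Pm$j) (U$j))"
    proof (rule key)
      show "\<forall>i. norm (Pm$i) = 1" using vert by (simp add: Pm_def)
      show "norm (U$j) = 1" using unit by simp
      show "\<forall>i. i \<noteq> j \<longrightarrow> cdot (Pm$i) (U$j) = 0"
        using vert by (auto simp: Pm_def cdot_comm[of "P _"])
    qed
    also have "cdot (Pm$j) (U$j) = e j" by (simp add: Pm_def e_def cdot_comm)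
    finally show ?thesis .
  qed
  have detU: "det U \<noteq> 0"
  proof -
    have "\<forall>x. transpose U *v x = 0 \<longrightarrow> x = 0"
    proof (intro allI impI)
      fix x assume h: "transpose U *v x = 0"
      have "(\<Sum>i\<in>UNIV. x$i *s U$i) = transpose U *v x"
        by (simp add: vec_eq_iff matrix_vector_mult_def transpose_def sum_component mult.commute)
      then have "\<forall>i. x$i = 0" using indep h unfolding lin_indep_family_def by metis
      then show "x = 0" by (simp add: vec_eq_iff)
    qed
    then obtain B where "B ** transpose U = mat 1" using matrix_left_invertible_ker by blast
    then have "invertible (transpose U)" using invertible_left_inverse by blast
    then have "det (transpose U) \<noteq> 0" by (simp add: invertible_det_nz)
    then show ?thesis by simp
  qed
  have prodeq: "det U * det Pm = (\<Prod>j\<in>UNIV. e j)"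
  proof -
    have "det (U ** transpose Pm) = (\<Prod>j\<in>UNIV. (U ** transpose Pm)$j$j)"
      by (rule det_diagonal)
        (use vert in \<open>simp add: matrix_matrix_mult_def transpose_def Pm_def cdot_def[symmetric]\<close>)
    also have "\<dots> = (\<Prod>j\<in>UNIV. e j)"
      by (simp add: matrix_matrix_mult_def transpose_def Pm_def cdot_def e_def)
    finally show ?thesis by (simp add: det_mul)
  qed
  have mpos: "m > 0"
  proof -
    have "0 < cmod (det U)" using detU by simp
    then show ?thesis using upU[of j0] mj0 by linarith
  qed
  have "m ^ CARD('n) = (\<Prod>j\<in>(UNIV::'n set). m)" by simp
  also have "\<dots> \<le> (\<Prod>j\<in>UNIV. cmod (e j))"
    by (rule prod_mono) (use mle mpos in auto)
  also have "\<dots> = cmod (det U) * cmod (det Pm)"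
    using prodeq by (metis norm_mult prod_norm)
  also have "\<dots> \<le> cmod (det U) * m"
    using upP[of j0] mj0 by (simp add: mult_left_mono)
  finally have "m * m ^ (CARD('n) - 1) \<le> m * cmod (det U)"
    using n1 by (metis Suc_diff_1 less_le_trans mult.commute pos2 power_Suc zero_less_card_finite)
  then have low: "m ^ (CARD('n) - 1) \<le> cmod (det U)" using mpos by simp
  have "cmod (det U) \<le> m" using upU[of j0] mj0 by simp
  then show ?thesis using low unfolding m_def by simp
qed

end
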